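(* Let $N$ be a positive even integer, $\alpha,\beta$ real with $(1-\alpha/2)_k\neq0$ for $k\le N/2$, and put $\eta=\tfrac12-\tfrac{\alpha+\beta}{4}$, $\tau=2N+2-\alpha-\beta$. Let $P_n$ be the monic dual $-1$ Hahn polynomials defined in the context. Then, as polynomial identities in $x$: for $0\le n\le N/2$, $$P_{2n}(x-1)=16^n(-N/2)_n(1-\alpha/2)_n\;{}_3F_2\!\left(\begin{matrix}-n,\ \eta+\tfrac x4,\ \eta-\tfrac x4\\ -\tfrac N2,\ 1-\tfrac\alpha2\end{matrix};1\right),$$ and for $0\le n\le N/2-1$, $$P_{2n+1}(x-1)=16^n(1-N/2)_n(1-\alpha/2)_n\,(x-\tau)\;{}_3F_2\!\left(\begin{matrix}-n,\ \eta+\tfrac x4,\ \eta-\tfrac x4\\ 1-\tfrac N2,\ 1-\tfrac\alpha2\end{matrix};1\right).$$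
   Context: $(c)_k=c(c+1)\cdots(c+k-1)$, $(c)_0=1$, and ${}_3F_2\!\left(\begin{matrix}-n,a_2,a_3\\ b_1,b_2\end{matrix};1\right)=\sum_{k=0}^n\frac{(-n)_k(a_2)_k(a_3)_k}{(b_1)_k(b_2)_k\,k!}$. For $N$ even and $\sigma=\alpha+\beta$: $b_n^{(-1)}=2N+1-\sigma$ for $n$ even, $b_n^{(-1)}=-2N-3+\sigma$ for $n$ odd; $u_n^{(-1)}=4n(\alpha-n)$ for $n$ even, $u_n^{(-1)}=4(N-n+1)(n+\beta-N-1)$ for $n$ odd. The monic dual $-1$ Hahn polynomials are defined by $P_{-1}=0$, $P_0=1$, $P_{n+1}(x)=(x-b_n^{(-1)})P_n(x)-u_n^{(-1)}P_{n-1}(x)$ for $n\ge0$. *)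

theory Defs
  imports "HOL-Analysis.Analysis" "HOL-Computational_Algebra.Polynomial"
begin

definition dh_b :: "nat \<Rightarrow> real \<Rightarrow> real \<Rightarrow> nat \<Rightarrow> real" where
  "dh_b N \<alpha> \<beta> n = (if even n then 2 * real N + 1 - (\<alpha> + \<beta>)
                      else - 2 * real N - 3 + (\<alpha> + \<beta>))"

definition dh_u :: "nat \<Rightarrow> real \<Rightarrow> real \<Rightarrow> nat \<Rightarrow> real" where
  "dh_u N \<alpha> \<beta> n = (if even n then 4 * real n * (\<alpha> - real n)
                      else 4 * (real N - real n + 1) * (real n + \<beta> - real N - 1))"

text \<open>Pair (P_n, P_{n+1}) of monic dual -1 Hahn polynomials, with P_{-1} = 0, P_0 = 1.\<close>
fun dh_pair :: "nat \<Rightarrow> real \<Rightarrow> real \<Rightarrow> nat \<Rightarrow> real poly \<times> real poly" where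
  "dh_pair N \<alpha> \<beta> 0 = (1, [:- dh_b N \<alpha> \<beta> 0, 1:])"
| "dh_pair N \<alpha> \<beta> (Suc n) =
     (let (p, q) = dh_pair N \<alpha> \<beta> n
      in (q, [:- dh_b N \<alpha> \<beta> (Suc n), 1:] * q - smult (dh_u N \<alpha> \<beta> (Suc n)) p))"

definition dual_hahn :: "nat \<Rightarrow> real \<Rightarrow> real \<Rightarrow> nat \<Rightarrow> real poly" where
  "dual_hahn N \<alpha> \<beta> n = fst (dh_pair N \<alpha> \<beta> n)"

definition hyp3F2 :: "nat \<Rightarrow> real \<Rightarrow> real \<Rightarrow> real \<Rightarrow> real \<Rightarrow> real" where
  "hyp3F2 n a2 a3 b1 b2 = (\<Sum>k=0..n. pochhammer (- real n) k * pochhammer a2 k * pochhammer a3 k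
        / (pochhammer b1 k * pochhammer b2 k * fact k))"

end

theory Submission
  imports Defs
begin

definition AA :: "nat \<Rightarrow> nat \<Rightarrow> real" where "AA n k = (-1)^k * real (n choose k)"

lemma AA_zero: "n < k \<Longrightarrow> AA n k = 0" by (simp add: AA_def)

lemma AA_R1: "AA (Suc n) k * (real n + 1 - real k) = (real n + 1) * AA n k"
proof (cases "k \<le> Suc n")
  case True
  have "(Suc n - k) * (Suc n choose k) = Suc n * (n choose k)"
    using binomial_absorb_comp[of "Suc n" k] by simp
  hence "real (Suc n - k) * real (Suc n choose k) = real (Suc n) * real (n choose k)"
    by (metis of_nat_mult)
  with True show ?thesis by (simp add: AA_def of_nat_diff algebra_simps)
next
  case False thus ?thesis by (simp add: AA_def binomial_eq_0)
qed

lemma AA_pascal: "AA (Suc n) (Suc k) = AA n (Suc k) - AA n k"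
  by (simp add: AA_def algebra_simps)

lemma binom_aux: "Suc k * (n choose Suc k) = (n - k) * (n choose k)"
proof (cases n)
  case 0 thus ?thesis by simp
next
  case (Suc n')
  have 1: "Suc k * (Suc n' choose Suc k) = Suc n' * (n' choose k)" by (rule Suc_times_binomial)
  have 2: "(Suc n' - k)*(Suc n' choose k) = Suc n' * (n' choose k)"
    using binomial_absorb_comp[of "Suc n'" k] by simp
  show ?thesis using 1 2 Suc by simp
qed

lemma AA_R2: "k \<le> n \<Longrightarrow> (real k + 1) * AA n (Suc k) = - (real n - real k) * AA n k"
proof -
  assume "k \<le> n"
  have "real (Suc k * (n choose Suc k)) = real ((n - k) * (n choose k))" using binom_aux by metis
  hence h: "(real k + 1) * real (n choose Suc k) = (real n - real k) * real (n choose k)"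
    using \<open>k \<le> n\<close> by (simp add: of_nat_diff algebra_simps)
  have "(real k + 1) * AA n (Suc k) = - ((-1)^k * ((real k + 1) * real (n choose Suc k)))"
    by (simp add: AA_def)
  also have "\<dots> = - (real n - real k) * AA n k" unfolding h by (simp add: AA_def algebra_simps)
  finally show ?thesis .
qed

definition eeF :: "real \<Rightarrow> real \<Rightarrow> nat \<Rightarrow> nat \<Rightarrow> real" where
  "eeF a c n k = 16^n * AA n k * pochhammer (a + real k) (n - k) * pochhammer (c + real k) (n - k)"
definition ooF :: "real \<Rightarrow> real \<Rightarrow> nat \<Rightarrow> nat \<Rightarrow> real" where
  "ooF a c n k = 16^n * AA n k * pochhammer (a + 1 + real k) (n - k) * pochhammer (c + real k) (n - k)"

lemma R1_term:
  assumes "k \<le> Suc n"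
  shows "ooF a c (Suc n) k = eeF a c (Suc n) k + 16 * (real n + 1) * (c + real n) * ooF a c n k"
proof (cases "k = Suc n")
  case True thus ?thesis by (simp add: ooF_def eeF_def AA_zero)
next
  case False
  then obtain j where j: "Suc n - k = Suc j" "n - k = j" "n = k + j" using assms
    by (metis Suc_diff_le add_diff_cancel_left' le_Suc_eq le_add_diff_inverse)
  define Pa where "Pa = pochhammer (a + 1 + real k) j"
  define Pc where "Pc = pochhammer (c + real k) j"
  have f1: "pochhammer (a + 1 + real k) (Suc j) = Pa * (a + 1 + real k + real j)"
    by (simp add: Pa_def pochhammer_Suc)
  have f2: "pochhammer (a + real k) (Suc j) = (a + real k) * Pa"
    by (simp add: Pa_def pochhammer_rec algebra_simps)
  have f3: "pochhammer (c + real k) (Suc j) = Pc * (c + real k + real j)"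
    by (simp add: Pc_def pochhammer_Suc)
  have r: "AA (Suc n) k * (real j + 1) = (real n + 1) * AA n k"
    using AA_R1[of n k] j by (simp add: algebra_simps)
  have e1: "ooF a c (Suc n) k = 16^n*16 * AA (Suc n) k * (Pa*(a+1+real k+real j)) * (Pc*(c+real k+real j))"
    unfolding ooF_def j(1) f1 f3 by simp
  have e2: "eeF a c (Suc n) k = 16^n*16 * AA (Suc n) k * ((a + real k) * Pa) * (Pc*(c+real k+real j))"
    unfolding eeF_def j(1) f2 f3 by simp
  have e3: "ooF a c n k = 16^n * AA n k * Pa * Pc"
    unfolding ooF_def j(2) Pa_def Pc_def by simp
  have nj: "real n = real k + real j" using j(3) by simp
  have "16^n*16 * AA (Suc n) k * (Pa*(a+1+real k+real j)) * (Pc*(c+real k+real j)) -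
     (16^n*16 * AA (Suc n) k * ((a + real k) * Pa) * (Pc*(c+real k+real j)) +
     16 * (real n + 1) * (c + real n) * (16^n * AA n k * Pa * Pc))
     = 16^n*16*Pa*Pc*(c+real k+real j)*(AA (Suc n) k * (real j + 1) - (real n + 1) * AA n k)"
    unfolding nj by (simp add: algebra_simps)
  with r show ?thesis unfolding e1 e2 e3 by simp
qed

lemma R2_term:
  assumes "k \<le> Suc n" and ed: "e = 1/2 - s/4" and td: "t = 2 - 4*a - s" and bd: "b = s - 2 + 2*c"
  shows "eeF a c (Suc n) k = ooF a c n k * (16*(e+real k)^2 - t^2)
     - 16*(if k = 0 then 0 else ooF a c n (k-1)) + 8*(a+real n)*(2*real n + b + 2*a) * eeF a c n k"
proof (cases "k = Suc n")
  case True
  have "AA (Suc n) (Suc n) = - AA n n" by (simp add: AA_def)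
  thus ?thesis using True by (simp add: ooF_def eeF_def AA_zero)
next
  case False
  then obtain j where j: "Suc n - k = Suc j" "n - k = j" "n = k + j" using assms
    by (metis Suc_diff_le add_diff_cancel_left' le_Suc_eq le_add_diff_inverse)
  define Pa where "Pa = pochhammer (a + 1 + real k) j"
  define Pc where "Pc = pochhammer (c + real k) j"
  define Am where "Am = (if k = 0 then 0 else AA n (k-1))"
  have f2: "pochhammer (a + real k) (Suc j) = (a + real k) * Pa"
    by (simp add: Pa_def pochhammer_rec algebra_simps)
  have f3: "pochhammer (c + real k) (Suc j) = Pc * (c + real k + real j)"
    by (simp add: Pc_def pochhammer_Suc)
  have f4: "pochhammer (a + real k) j * (a + real n) = (a + real k) * Pa"
    using f2 pochhammer_Suc[of "a + real k" j] j(3) by (simp add: algebra_simps)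
  have e1: "eeF a c (Suc n) k = 16^n*16 * AA (Suc n) k * ((a + real k) * Pa) * (Pc*(c+real k+real j))"
    unfolding eeF_def j(1) f2 f3 by simp
  have e2: "ooF a c n k = 16^n * AA n k * Pa * Pc"
    unfolding ooF_def j(2) Pa_def Pc_def by simp
  have e3: "(a+real n) * eeF a c n k = 16^n * AA n k * ((a + real k) * Pa) * Pc"
  proof -
    have "(a+real n)*eeF a c n k = 16^n*AA n k*(pochhammer (a+real k) j*(a+real n))*Pc"
      unfolding eeF_def j(2) Pc_def by (simp add: algebra_simps)
    thus ?thesis unfolding f4 .
  qed
  have e4: "(if k = 0 then 0 else ooF a c n (k-1)) = 16^n * Am * ((a+real k)*Pa) * ((c + real k - 1)*Pc)"
  proof (cases k)
    case 0 thus ?thesis by (simp add: Am_def)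
  next
    case (Suc k')
    have "n - k' = Suc j" using j Suc by simp
    moreover have "pochhammer (c + real k') (Suc j) = (c + real k - 1) * Pc"
      by (simp add: Pc_def pochhammer_rec Suc algebra_simps)
    moreover have "a + 1 + real k' = a + real k" using Suc by simp
    hence "pochhammer (a + 1 + real k') (Suc j) = (a + real k) * Pa" using f2 by metis
    ultimately show ?thesis unfolding ooF_def Am_def using Suc by simp
  qed
  have rA1: "AA (Suc n) k = AA n k - Am"
    by (cases k) (simp_all add: Am_def AA_def algebra_simps)
  have rA2: "real k * AA n k = -(real j + 1) * Am"
  proof (cases k)
    case 0 thus ?thesis by (simp add: Am_def)
  next
    case (Suc k')
    have "k' \<le> n" using j Suc by simp
    from AA_R2[OF this] show ?thesis using Suc j by (simp add: Am_def algebra_simps)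
  qed
  have nj: "real n = real k + real j" using j(3) by simp
  have key: "16^n*16 * AA (Suc n) k * ((a + real k) * Pa) * (Pc*(c+real k+real j)) -
     (16^n * AA n k * Pa * Pc * (16*(e+real k)^2 - t^2)
     - 16*(16^n * Am * ((a+real k)*Pa) * ((c + real k - 1)*Pc))
     + 8*(2*real n + b + 2*a) * (16^n * AA n k * ((a + real k) * Pa) * Pc))
     = 16^n*8*(a+real k)*Pa*Pc*(2*(c+real k+real j)*(AA (Suc n) k - AA n k + Am)
         - 2*(real k * AA n k + (real j + 1) * Am))"
    unfolding nj ed td bd by (simp add: algebra_simps power2_eq_square)
  have "eeF a c (Suc n) k - (ooF a c n k * (16*(e+real k)^2 - t^2)
     - 16*(if k = 0 then 0 else ooF a c n (k-1)) + 8*(2*real n + b + 2*a) * ((a+real n) * eeF a c n k)) = 0"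
  proof -
    have z1: "AA (Suc n) k - AA n k + Am = 0" using rA1 by simp
    have z2: "real k * AA n k + (real j + 1) * Am = 0" using rA2 by (simp add: algebra_simps)
    show ?thesis unfolding e1 e2 e3 e4 key z1 z2 by simp
  qed
  thus ?thesis by (simp add: algebra_simps)
qed

definition qq :: "real \<Rightarrow> real \<Rightarrow> nat \<Rightarrow> real" where
  "qq e X k = pochhammer (e + X/4) k * pochhammer (e - X/4) k"
definition EEs where "EEs a c e X n = (\<Sum>k\<le>n. eeF a c n k * qq e X k)"
definition OOs where "OOs a c e X n = (\<Sum>k\<le>n. ooF a c n k * qq e X k)"

lemma qq_step: "X^2 * qq e X k = 16*(e+real k)^2 * qq e X k - 16 * qq e X (Suc k)"
  by (simp add: qq_def pochhammer_Suc algebra_simps power2_eq_square)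

lemma OOs_ext: "OOs a c e X n = (\<Sum>k\<le>Suc n. ooF a c n k * qq e X k)"
  by (simp add: OOs_def ooF_def AA_zero)
lemma EEs_ext: "EEs a c e X n = (\<Sum>k\<le>Suc n. eeF a c n k * qq e X k)"
  by (simp add: EEs_def eeF_def AA_zero)

lemma R1_sum: "OOs a c e X (Suc n) = EEs a c e X (Suc n) + 16 * (real n + 1) * (c + real n) * OOs a c e X n"
proof -
  have "OOs a c e X (Suc n) = (\<Sum>k\<le>Suc n. (eeF a c (Suc n) k + 16 * (real n + 1) * (c + real n) * ooF a c n k) * qq e X k)"
    unfolding OOs_def by (rule sum.cong) (simp_all add: R1_term)
  also have "\<dots> = EEs a c e X (Suc n) + 16 * (real n + 1) * (c + real n) * OOs a c e X n"
    unfolding EEs_def OOs_ext by (simp add: sum.distrib sum_distrib_left algebra_simps)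
  finally show ?thesis .
qed

lemma R2_sum:
  assumes ed: "e = 1/2 - s/4" and td: "t = 2 - 4*a - s" and bd: "b = s - 2 + 2*c"
  shows "EEs a c e X (Suc n) = (X^2 - t^2) * OOs a c e X n + 8*(a+real n)*(2*real n + b + 2*a) * EEs a c e X n"
proof -
  define U where "U = 8*(a+real n)*(2*real n + b + 2*a)"
  define D where "D k = 16*(e+real k)^2 - t^2" for k
  define g where "g k = (if k = 0 then 0 else ooF a c n (k-1))" for k
  have "EEs a c e X (Suc n) = (\<Sum>k\<le>Suc n. ooF a c n k * D k * qq e X k - 16 * (g k * qq e X k) + U * (eeF a c n k * qq e X k))"
    unfolding EEs_def by (rule sum.cong) (simp_all add: R2_term[OF _ ed td bd] D_def g_def U_def algebra_simps)
  also have "\<dots> = (\<Sum>k\<le>Suc n. ooF a c n k * D k * qq e X k) - 16 * (\<Sum>k\<le>Suc n. g k * qq e X k) + U * EEs a c e X n"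
    unfolding EEs_ext by (simp add: sum.distrib sum_subtractf sum_distrib_left distrib_left)
  also have "(\<Sum>k\<le>Suc n. ooF a c n k * D k * qq e X k) = (\<Sum>k\<le>n. ooF a c n k * D k * qq e X k)"
    by (simp add: ooF_def AA_zero)
  also have "(\<Sum>k\<le>Suc n. g k * qq e X k) = (\<Sum>k\<le>n. ooF a c n k * qq e X (Suc k))"
    by (subst sum.atMost_Suc_shift) (simp add: g_def)
  also have "(X^2 - t^2) * OOs a c e X n = (\<Sum>k\<le>n. ooF a c n k * D k * qq e X k) - 16 * (\<Sum>k\<le>n. ooF a c n k * qq e X (Suc k))"
  proof -
    have "(X^2 - t^2) * OOs a c e X n = (\<Sum>k\<le>n. ooF a c n k * (X^2 * qq e X k - t^2 * qq e X k))"
      unfolding OOs_def by (simp add: sum_distrib_left algebra_simps)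
    also have "\<dots> = (\<Sum>k\<le>n. ooF a c n k * D k * qq e X k - 16 * (ooF a c n k * qq e X (Suc k)))"
      by (rule sum.cong[OF refl], unfold qq_step D_def, simp add: algebra_simps)
    finally show ?thesis by (simp add: sum_subtractf sum_distrib_left)
  qed
  ultimately show ?thesis unfolding U_def by simp
qed

lemma AA_poch: "AA n k = pochhammer (- real n) k / fact k"
proof -
  have "real (n choose k) = (-1)^k * pochhammer (- real n) k / fact k"
    using binomial_gbinomial[of n k, where 'a=real] gbinomial_pochhammer[of "real n" k] by simp
  hence "(-1)^k * real (n choose k) = ((-1)^k * (-1)^k) * pochhammer (- real n) k / fact k"
    by simp
  also have "(-1::real)^k * (-1)^k = 1" by (simp flip: power_add)
  finally show ?thesis by (simp add: AA_def)
qed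

lemma hyp_E:
  assumes "\<And>k. k \<le> n \<Longrightarrow> pochhammer a k \<noteq> 0" "\<And>k. k \<le> n \<Longrightarrow> pochhammer c k \<noteq> (0::real)"
  shows "16^n * pochhammer a n * pochhammer c n * hyp3F2 n (e + X/4) (e - X/4) a c = EEs a c e X n"
proof -
  have "16^n * pochhammer a n * pochhammer c n * hyp3F2 n (e + X/4) (e - X/4) a c
    = (\<Sum>k\<le>n. 16^n * pochhammer a n * pochhammer c n * (pochhammer (- real n) k * pochhammer (e + X/4) k * pochhammer (e - X/4) k
        / (pochhammer a k * pochhammer c k * fact k)))"
    unfolding hyp3F2_def atLeast0AtMost by (simp add: sum_distrib_left)
  also have "\<dots> = EEs a c e X n" unfolding EEs_def
  proof (rule sum.cong[OF refl])
    fix k assume "k \<in> {..n}"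
    hence kn: "k \<le> n" by simp
    have pa: "pochhammer a n = pochhammer a k * pochhammer (a + real k) (n-k)"
      using pochhammer_product[OF kn, of a] by simp
    have pc: "pochhammer c n = pochhammer c k * pochhammer (c + real k) (n-k)"
      using pochhammer_product[OF kn, of c] by simp
    have nz: "pochhammer a k \<noteq> 0" "pochhammer c k \<noteq> 0" "fact k \<noteq> (0::real)"
      using assms kn by auto
    show "16^n * pochhammer a n * pochhammer c n * (pochhammer (- real n) k * pochhammer (e + X/4) k * pochhammer (e - X/4) k
        / (pochhammer a k * pochhammer c k * fact k)) = eeF a c n k * qq e X k"
      unfolding eeF_def qq_def AA_poch pa pc using nz by (simp add: field_simps)
  qed
  finally show ?thesis .
qed

lemma OOs_EEs: "OOs a c e X n = EEs (a+1) c e X n"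
  by (simp add: OOs_def EEs_def ooF_def eeF_def)

lemma dh_fst_Suc: "dual_hahn N al be (Suc n) = snd (dh_pair N al be n)"
  by (simp add: dual_hahn_def split_beta)

lemma dh_rec: "dual_hahn N al be (Suc (Suc n)) =
   [:- dh_b N al be (Suc n), 1:] * dual_hahn N al be (Suc n) - smult (dh_u N al be (Suc n)) (dual_hahn N al be n)"
  by (simp add: dh_fst_Suc split_beta dual_hahn_def)

lemma dh_rec_poly: "poly (dual_hahn N al be (Suc (Suc m))) y =
   (y - dh_b N al be (Suc m)) * poly (dual_hahn N al be (Suc m)) y - dh_u N al be (Suc m) * poly (dual_hahn N al be m) y"
  unfolding dh_rec by (simp add: algebra_simps)

lemma dh_0: "dual_hahn N al be 0 = 1" by (simp add: dual_hahn_def)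
lemma dh_1: "dual_hahn N al be (Suc 0) = [:- dh_b N al be 0, 1:]" by (simp add: dual_hahn_def)

lemma main_ind:
  fixes N :: nat and al be X :: real
  defines "a \<equiv> - real N / 2" and "c \<equiv> 1 - al/2" and "e \<equiv> 1/2 - (al+be)/4" and "t \<equiv> 2 * real N + 2 - al - be"
  shows "poly (dual_hahn N al be (2*n)) (X - 1) = EEs a c e X n \<and>
         poly (dual_hahn N al be (2*n+1)) (X - 1) = (X - t) * OOs a c e X n"
proof (induction n)
  case 0
  show ?case by (simp add: dh_0 dh_1 EEs_def OOs_def eeF_def ooF_def AA_def qq_def dh_b_def t_def)
next
  case (Suc n)
  have ed: "e = 1/2 - (al+be)/4" and td: "t = 2 - 4*a - (al+be)" and bd: "be = (al+be) - 2 + 2*c"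
    by (simp_all add: e_def t_def a_def c_def)
  have I1: "poly (dual_hahn N al be (2*n)) (X - 1) = EEs a c e X n" using Suc.IH by simp
  have I2: "poly (dual_hahn N al be (Suc (2*n))) (X - 1) = (X - t) * OOs a c e X n" using Suc.IH by simp
  have E: "poly (dual_hahn N al be (2*Suc n)) (X - 1) = EEs a c e X (Suc n)"
  proof -
    have "2 * Suc n = Suc (Suc (2*n))" by simp
    hence "poly (dual_hahn N al be (2*Suc n)) (X - 1) =
      (X - 1 - dh_b N al be (Suc (2*n))) * poly (dual_hahn N al be (Suc (2*n))) (X - 1)
      - dh_u N al be (Suc (2*n)) * poly (dual_hahn N al be (2*n)) (X - 1)"
      by (simp only: dh_rec_poly)
    also have "\<dots> = (X^2 - t^2) * OOs a c e X n + 8*(a+real n)*(2*real n + be + 2*a) * EEs a c e X n"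
      unfolding I1 I2 by (simp add: dh_b_def dh_u_def t_def a_def power2_eq_square algebra_simps)
    also have "\<dots> = EEs a c e X (Suc n)" using R2_sum[OF ed td bd] by simp
    finally show ?thesis .
  qed
  have "poly (dual_hahn N al be (2*Suc n + 1)) (X - 1) =
      (X - 1 - dh_b N al be (Suc (Suc (2*n)))) * poly (dual_hahn N al be (2*Suc n)) (X - 1)
      - dh_u N al be (Suc (Suc (2*n))) * poly (dual_hahn N al be (Suc (2*n))) (X - 1)"
    using dh_rec_poly[of N al be "Suc (2*n)"] by simp
  also have "\<dots> = (X - t) * (EEs a c e X (Suc n) + 16 * (real n + 1) * (c + real n) * OOs a c e X n)"
    unfolding I2 E by (simp add: dh_b_def dh_u_def t_def c_def algebra_simps)
  also have "\<dots> = (X - t) * OOs a c e X (Suc n)" using R1_sum by simp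
  finally show ?case using E by simp
qed

theorem mainTheorem5:
  fixes N :: nat and \<alpha> \<beta> :: real
  assumes "N > 0" and "even N"
    and "\<And>k. k \<le> N div 2 \<Longrightarrow> pochhammer (1 - \<alpha> / 2) k \<noteq> 0"
  defines "\<eta> \<equiv> 1/2 - (\<alpha> + \<beta>) / 4" and "\<tau> \<equiv> 2 * real N + 2 - \<alpha> - \<beta>"
  shows "(\<forall>n \<le> N div 2. \<forall>x::real.
            poly (dual_hahn N \<alpha> \<beta> (2*n)) (x - 1) =
              16 ^ n * pochhammer (- real N / 2) n * pochhammer (1 - \<alpha> / 2) n *
              hyp3F2 n (\<eta> + x / 4) (\<eta> - x / 4) (- real N / 2) (1 - \<alpha> / 2))
       \<and> (\<forall>n. n + 1 \<le> N div 2 \<longrightarrow> (\<forall>x::real.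
            poly (dual_hahn N \<alpha> \<beta> (2*n+1)) (x - 1) =
              16 ^ n * pochhammer (1 - real N / 2) n * pochhammer (1 - \<alpha> / 2) n * (x - \<tau>) *
              hyp3F2 n (\<eta> + x / 4) (\<eta> - x / 4) (1 - real N / 2) (1 - \<alpha> / 2)))"
proof -
  define M where "M = N div 2"
  have NM: "real N = 2 * real M" using \<open>even N\<close> unfolding M_def by (metis evenE nonzero_mult_div_cancel_left of_nat_mult of_nat_numeral zero_neq_numeral)
  have aM: "- real N / 2 = - real M" using NM by simp
  have a1M: "1 - real N / 2 = - real M + 1" using NM by simp
  show ?thesis
  proof (intro conjI allI impI)
    fix n x assume n: "n \<le> N div 2"
    have h1: "pochhammer (- real N / 2) k \<noteq> 0" if "k \<le> n" for k
      unfolding aM pochhammer_eq_0_iff using that n M_def by auto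
    have h2: "pochhammer (1 - \<alpha> / 2) k \<noteq> 0" if "k \<le> n" for k
      using assms(3) that n by auto
    show "poly (dual_hahn N \<alpha> \<beta> (2*n)) (x - 1) =
              16 ^ n * pochhammer (- real N / 2) n * pochhammer (1 - \<alpha> / 2) n *
              hyp3F2 n (\<eta> + x / 4) (\<eta> - x / 4) (- real N / 2) (1 - \<alpha> / 2)"
    proof -
      have A: "16 ^ n * pochhammer (- real N / 2) n * pochhammer (1 - \<alpha> / 2) n *
              hyp3F2 n (\<eta> + x / 4) (\<eta> - x / 4) (- real N / 2) (1 - \<alpha> / 2) = EEs (- real N / 2) (1 - \<alpha> / 2) \<eta> x n"
        by (rule hyp_E[OF h1 h2])
      have B: "poly (dual_hahn N \<alpha> \<beta> (2*n)) (x - 1) = EEs (- real N / 2) (1 - \<alpha> / 2) (1/2 - (\<alpha> + \<beta>) / 4) x n"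
        by (rule main_ind[THEN conjunct1])
      show ?thesis unfolding A B unfolding \<eta>_def by (rule refl)
    qed
  next
    fix n x assume n: "n + 1 \<le> N div 2"
    have h1: "pochhammer (- real N / 2 + 1) k \<noteq> 0" if "k \<le> n" for k
    proof
      assume "pochhammer (- real N / 2 + 1) k = 0"
      then obtain i where "i < k" "- real N / 2 + 1 = - real i" unfolding pochhammer_eq_0_iff by auto
      hence "real i + 1 = real M" using aM by simp
      hence "i + 1 = M" by linarith
      thus False using \<open>i < k\<close> that n M_def by simp
    qed
    have h2: "pochhammer (1 - \<alpha> / 2) k \<noteq> 0" if "k \<le> n" for k
      using assms(3) that n by auto
    have e1: "1 - real N / 2 = - real N / 2 + 1" by simp
    show "poly (dual_hahn N \<alpha> \<beta> (2*n+1)) (x - 1) =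
              16 ^ n * pochhammer (1 - real N / 2) n * pochhammer (1 - \<alpha> / 2) n * (x - \<tau>) *
              hyp3F2 n (\<eta> + x / 4) (\<eta> - x / 4) (1 - real N / 2) (1 - \<alpha> / 2)"
    proof -
      have A: "16 ^ n * pochhammer (- real N / 2 + 1) n * pochhammer (1 - \<alpha> / 2) n *
              hyp3F2 n (\<eta> + x / 4) (\<eta> - x / 4) (- real N / 2 + 1) (1 - \<alpha> / 2) = EEs (- real N / 2 + 1) (1 - \<alpha> / 2) \<eta> x n"
        by (rule hyp_E[OF h1 h2])
      have B: "poly (dual_hahn N \<alpha> \<beta> (2*n+1)) (x - 1) = (x - (2 * real N + 2 - \<alpha> - \<beta>)) * OOs (- real N / 2) (1 - \<alpha> / 2) (1/2 - (\<alpha> + \<beta>) / 4) x n"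
        by (rule main_ind[THEN conjunct2])
      have C: "16 ^ n * pochhammer (- real N / 2 + 1) n * pochhammer (1 - \<alpha> / 2) n * (x - \<tau>) *
              hyp3F2 n (\<eta> + x / 4) (\<eta> - x / 4) (- real N / 2 + 1) (1 - \<alpha> / 2)
          = (x - \<tau>) * (16 ^ n * pochhammer (- real N / 2 + 1) n * pochhammer (1 - \<alpha> / 2) n *
              hyp3F2 n (\<eta> + x / 4) (\<eta> - x / 4) (- real N / 2 + 1) (1 - \<alpha> / 2))"
        by (simp only: mult.assoc mult.commute mult.left_commute)
      show ?thesis unfolding e1 unfolding C unfolding A B OOs_EEs unfolding \<eta>_def \<tau>_def by (rule refl)
    qed
  qed
qed

end
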